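(* Let $i\in\{1,2,3',3'',4\}$. For every $G\in\mathcal{G}_i$ there exists a finite topology $\tau$ on $V(G)$ such that $G_i(\tau)\cong G$ and $m_\tau(x)\ne m_\tau(y)$ for all distinct $x,y\in V(G)$.
   Context: A finite topology $\tau$ on a finite set $X$ is a family of subsets of $X$ (open sets) containing $\emptyset,X$ and closed under unions and intersections; complements of open sets are closed. $m_\tau(x)$ is the intersection of all open sets containing $x$. Separation of distinct $x,y$: $T_1$-separated if there are open $U_x,U_y$ with $x\in U_x\not\ni y$, $y\in U_y\not\ni x$; $T_2$-separated if they have disjoint open neighborhoods; with (a): exist closed $J$, open $U_J,U_y$, $x\in J\subseteq U_J$, $y\in U_y$, $U_J\cap U_y=\emptyset$, and (b): exist closed $K$, open $U_x,U_K$, $x\in U_x$, $y\in K\subseteq U_K$, $U_x\cap U_K=\emptyset$: $T_{3'}$-separated if (a) or (b), $T_{3''}$-separated if (a) and (b); $T_4$-separated if there exist closed $J\ni x$, $K\ni y$ and disjoint open $U_J\supseteq J$, $U_K\supseteq K$. $G_i(\tau)$ is the simple graph on $X$ where distinct $x,y$ are adjacent iff not $T_i$-separated; $\mathcal{G}_i$ is the class of graphs isomorphic to some $G_i(\tau)$ with $\tau$ a finite topology. *)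

theory Defs
  imports Main
begin

definition finite_topology :: "'a set \<Rightarrow> 'a set set \<Rightarrow> bool" where
  "finite_topology X \<tau> \<longleftrightarrow> finite X \<and> \<tau> \<subseteq> Pow X \<and> {} \<in> \<tau> \<and> X \<in> \<tau> \<and>
     (\<forall>U\<in>\<tau>. \<forall>W\<in>\<tau>. U \<union> W \<in> \<tau> \<and> U \<inter> W \<in> \<tau>)"

definition closed_in_top :: "'a set \<Rightarrow> 'a set set \<Rightarrow> 'a set \<Rightarrow> bool" where
  "closed_in_top X \<tau> K \<longleftrightarrow> K \<subseteq> X \<and> X - K \<in> \<tau>"

definition minimal_open :: "'a set set \<Rightarrow> 'a \<Rightarrow> 'a set" where
  "minimal_open \<tau> x = \<Inter> {U \<in> \<tau>. x \<in> U}"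

datatype sep_axiom = T1 | T2 | T3' | T3'' | T4

definition T3a_sep :: "'a set \<Rightarrow> 'a set set \<Rightarrow> 'a \<Rightarrow> 'a \<Rightarrow> bool" where
  "T3a_sep X \<tau> x y \<longleftrightarrow> (\<exists>J UJ Uy. closed_in_top X \<tau> J \<and> UJ \<in> \<tau> \<and> Uy \<in> \<tau> \<and>
      x \<in> J \<and> J \<subseteq> UJ \<and> y \<in> Uy \<and> UJ \<inter> Uy = {})"

definition T3b_sep :: "'a set \<Rightarrow> 'a set set \<Rightarrow> 'a \<Rightarrow> 'a \<Rightarrow> bool" where
  "T3b_sep X \<tau> x y \<longleftrightarrow> (\<exists>K Ux UK. closed_in_top X \<tau> K \<and> Ux \<in> \<tau> \<and> UK \<in> \<tau> \<and>
      x \<in> Ux \<and> y \<in> K \<and> K \<subseteq> UK \<and> Ux \<inter> UK = {})"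

fun separated :: "sep_axiom \<Rightarrow> 'a set \<Rightarrow> 'a set set \<Rightarrow> 'a \<Rightarrow> 'a \<Rightarrow> bool" where
  "separated T1 X \<tau> x y \<longleftrightarrow>
     (\<exists>Ux Uy. Ux \<in> \<tau> \<and> Uy \<in> \<tau> \<and> x \<in> Ux \<and> y \<notin> Ux \<and> y \<in> Uy \<and> x \<notin> Uy)"
| "separated T2 X \<tau> x y \<longleftrightarrow>
     (\<exists>Ux Uy. Ux \<in> \<tau> \<and> Uy \<in> \<tau> \<and> x \<in> Ux \<and> y \<in> Uy \<and> Ux \<inter> Uy = {})"
| "separated T3' X \<tau> x y \<longleftrightarrow> T3a_sep X \<tau> x y \<or> T3b_sep X \<tau> x y"
| "separated T3'' X \<tau> x y \<longleftrightarrow> T3a_sep X \<tau> x y \<and> T3b_sep X \<tau> x y"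
| "separated T4 X \<tau> x y \<longleftrightarrow>
     (\<exists>J K UJ UK. closed_in_top X \<tau> J \<and> closed_in_top X \<tau> K \<and> UJ \<in> \<tau> \<and> UK \<in> \<tau> \<and>
        x \<in> J \<and> y \<in> K \<and> J \<subseteq> UJ \<and> K \<subseteq> UK \<and> UJ \<inter> UK = {})"

(* Simple graphs are given as a vertex set V with an adjacency relation E (only its
   restriction to V matters). G_i(tau) has vertex set X and adjacency below. *)
definition Gi_adj :: "sep_axiom \<Rightarrow> 'a set \<Rightarrow> 'a set set \<Rightarrow> 'a \<Rightarrow> 'a \<Rightarrow> bool" where
  "Gi_adj i X \<tau> x y \<longleftrightarrow> x \<noteq> y \<and> \<not> separated i X \<tau> x y"

definition simple_graph :: "'a set \<Rightarrow> ('a \<Rightarrow> 'a \<Rightarrow> bool) \<Rightarrow> bool" where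
  "simple_graph V E \<longleftrightarrow> finite V \<and> (\<forall>x\<in>V. \<not> E x x) \<and> (\<forall>x\<in>V. \<forall>y\<in>V. E x y \<longleftrightarrow> E y x)"

definition graph_iso :: "'a set \<Rightarrow> ('a \<Rightarrow> 'a \<Rightarrow> bool) \<Rightarrow> 'b set \<Rightarrow> ('b \<Rightarrow> 'b \<Rightarrow> bool) \<Rightarrow> bool" where
  "graph_iso V1 E1 V2 E2 \<longleftrightarrow> (\<exists>f. bij_betw f V1 V2 \<and> (\<forall>x\<in>V1. \<forall>y\<in>V1. E1 x y \<longleftrightarrow> E2 (f x) (f y)))"

end

theory Submission imports Defs begin



lemma sep_mono:
  assumes "\<sigma> \<subseteq> \<tau>" "separated i X \<sigma> x y"
  shows "separated i X \<tau> x y"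
proof -
  have c: "closed_in_top X \<sigma> K \<Longrightarrow> closed_in_top X \<tau> K" for K
    using assms(1) unfolding closed_in_top_def by blast
  show ?thesis using assms(2)
    by (cases i) (auto simp: T3a_sep_def T3b_sep_def, (meson assms(1) c subsetD)+)
qed


lemma not_sep:
  assumes "(\<forall>U\<in>\<tau>. x\<in>U \<longrightarrow> y\<in>U) \<or> (\<forall>U\<in>\<tau>. y\<in>U \<longrightarrow> x\<in>U)"
  shows "\<not> separated i X \<tau> x y"
proof
  assume s: "separated i X \<tau> x y"
  have A: False if "T3a_sep X \<tau> x y"
  proof -
    from that obtain J UJ Uy where h: "UJ \<in> \<tau>" "Uy \<in> \<tau>"
      "x \<in> J" "J \<subseteq> UJ" "y \<in> Uy" "UJ \<inter> Uy = {}" unfolding T3a_sep_def by blast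
    show False using assms h by blast
  qed
  have B: False if "T3b_sep X \<tau> x y"
  proof -
    from that obtain K Ux UK where h: "Ux \<in> \<tau>" "UK \<in> \<tau>"
      "x \<in> Ux" "y \<in> K" "K \<subseteq> UK" "Ux \<inter> UK = {}" unfolding T3b_sep_def by blast
    show False using assms h by blast
  qed
  show False
  proof (cases i)
    case T1 then show ?thesis using assms s by auto
  next
    case T2 then show ?thesis using assms s by auto
  next
    case T4
    then obtain J K UJ UK where h: "UJ \<in> \<tau>" "UK \<in> \<tau>"
        "x \<in> J" "y \<in> K" "J \<subseteq> UJ" "K \<subseteq> UK" "UJ \<inter> UK = {}"
      using s by auto
    show False using assms h by blast
  qed (use s A B in auto)
qed

lemma sep_back:
  assumes i: "i \<noteq> T1"
    and phi1: "\<And>U. U\<in>\<tau>1 \<Longrightarrow> \<phi> U \<in> \<tau>2 \<and> U \<subseteq> \<phi> U"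
    and phi2: "\<And>U W. U\<in>\<tau>1 \<Longrightarrow> W\<in>\<tau>1 \<Longrightarrow> U \<inter> W = {} \<Longrightarrow> \<phi> U \<inter> \<phi> W = {}"
    and phi3: "\<And>J z. closed_in_top X \<tau>1 J \<Longrightarrow> z \<in> J \<Longrightarrow>
        \<exists>J'. closed_in_top X \<tau>2 J' \<and> z \<in> J' \<and> (\<forall>U\<in>\<tau>1. J \<subseteq> U \<longrightarrow> J' \<subseteq> \<phi> U)"
    and s: "separated i X \<tau>1 x y"
  shows "separated i X \<tau>2 x y"
proof -
  have A: "T3a_sep X \<tau>2 x y" if "T3a_sep X \<tau>1 x y"
  proof -
    from that obtain J UJ Uy where h: "closed_in_top X \<tau>1 J" "UJ \<in> \<tau>1" "Uy \<in> \<tau>1"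
      "x \<in> J" "J \<subseteq> UJ" "y \<in> Uy" "UJ \<inter> Uy = {}" unfolding T3a_sep_def by blast
    from phi3[OF h(1,4)] h(2,5) obtain J' where jj: "closed_in_top X \<tau>2 J'" "x \<in> J'" "J' \<subseteq> \<phi> UJ"
      by blast
    show ?thesis unfolding T3a_sep_def
      apply (rule exI[of _ J'], rule exI[of _ "\<phi> UJ"], rule exI[of _ "\<phi> Uy"])
      using jj h phi1[OF h(2)] phi1[OF h(3)] phi2[OF h(2,3,7)] by auto
  qed
  have B: "T3b_sep X \<tau>2 x y" if "T3b_sep X \<tau>1 x y"
  proof -
    from that obtain K Ux UK where h: "closed_in_top X \<tau>1 K" "Ux \<in> \<tau>1" "UK \<in> \<tau>1"
      "x \<in> Ux" "y \<in> K" "K \<subseteq> UK" "Ux \<inter> UK = {}" unfolding T3b_sep_def by blast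
    from phi3[OF h(1,5)] h(3,6) obtain K' where jj: "closed_in_top X \<tau>2 K'" "y \<in> K'" "K' \<subseteq> \<phi> UK"
      by blast
    show ?thesis unfolding T3b_sep_def
      apply (rule exI[of _ K'], rule exI[of _ "\<phi> Ux"], rule exI[of _ "\<phi> UK"])
      using jj h phi1[OF h(2)] phi1[OF h(3)] phi2[OF h(2,3,7)] by auto
  qed
  show ?thesis
  proof (cases i)
    case T1 then show ?thesis using i by simp
  next
    case T2
    then obtain Ux Uy where h: "Ux \<in> \<tau>1" "Uy \<in> \<tau>1" "x \<in> Ux" "y \<in> Uy" "Ux \<inter> Uy = {}"
      using s by auto
    show ?thesis using T2 apply (simp only: separated.simps)
      apply (rule exI[of _ "\<phi> Ux"], rule exI[of _ "\<phi> Uy"])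
      using h phi1[OF h(1)] phi1[OF h(2)] phi2[OF h(1,2,5)] by auto
  next
    case T4
    then obtain J K UJ UK where h: "closed_in_top X \<tau>1 J" "closed_in_top X \<tau>1 K" "UJ \<in> \<tau>1" "UK \<in> \<tau>1"
        "x \<in> J" "y \<in> K" "J \<subseteq> UJ" "K \<subseteq> UK" "UJ \<inter> UK = {}"
      using s by auto
    from phi3[OF h(1,5)] h(3,7) obtain J' where j: "closed_in_top X \<tau>2 J'" "x \<in> J'" "J' \<subseteq> \<phi> UJ"
      by blast
    from phi3[OF h(2,6)] h(4,8) obtain K' where k: "closed_in_top X \<tau>2 K'" "y \<in> K'" "K' \<subseteq> \<phi> UK"
      by blast
    show ?thesis using T4 apply (simp only: separated.simps)
      apply (rule exI[of _ J'], rule exI[of _ K'], rule exI[of _ "\<phi> UJ"], rule exI[of _ "\<phi> UK"])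
      using j k phi1[OF h(3)] phi1[OF h(4)] phi2[OF h(3,4,9)] by auto
  next
    case T3' then show ?thesis using s A B by auto
  next
    case T3'' then show ?thesis using s A B by auto
  qed
qed

lemma closed_img:
  assumes "inj_on f X" "closed_in_top X \<sigma> J"
  shows "closed_in_top (f ` X) ((`) f ` \<sigma>) (f ` J)"
proof -
  have "f ` X - f ` J = f ` (X - J)" using assms inj_on_image_set_diff[of f X X J]
    unfolding closed_in_top_def by auto
  then show ?thesis using assms unfolding closed_in_top_def by auto
qed

lemma sep_inj:
  assumes inj: "inj_on f X" and P: "\<sigma> \<subseteq> Pow X" and xy: "x \<in> X" "y \<in> X"
    and s: "separated i X \<sigma> x y"
  shows "separated i (f ` X) ((`) f ` \<sigma>) (f x) (f y)"
proof -
  have int: "U \<in> \<sigma> \<Longrightarrow> W \<in> \<sigma> \<Longrightarrow> f ` U \<inter> f ` W = f ` (U \<inter> W)" for U W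
    using inj_on_image_Int[OF inj] P by blast
  have mem: "U \<in> \<sigma> \<Longrightarrow> z \<in> X \<Longrightarrow> (f z \<in> f ` U) = (z \<in> U)" for U z
    using inj P by (auto dest: inj_onD)
  have sub: "A \<subseteq> B \<Longrightarrow> f ` A \<subseteq> f ` B" for A B by blast
  have A: "T3a_sep (f ` X) ((`) f ` \<sigma>) (f x) (f y)" if "T3a_sep X \<sigma> x y"
  proof -
    from that obtain J UJ Uy where h: "closed_in_top X \<sigma> J" "UJ \<in> \<sigma>" "Uy \<in> \<sigma>"
      "x \<in> J" "J \<subseteq> UJ" "y \<in> Uy" "UJ \<inter> Uy = {}" unfolding T3a_sep_def by blast
    show ?thesis unfolding T3a_sep_def
      apply (rule exI[of _ "f ` J"], rule exI[of _ "f ` UJ"], rule exI[of _ "f ` Uy"])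
      using h closed_img[OF inj h(1)] int[OF h(2,3)] by auto
  qed
  have B: "T3b_sep (f ` X) ((`) f ` \<sigma>) (f x) (f y)" if "T3b_sep X \<sigma> x y"
  proof -
    from that obtain K Ux UK where h: "closed_in_top X \<sigma> K" "Ux \<in> \<sigma>" "UK \<in> \<sigma>"
      "x \<in> Ux" "y \<in> K" "K \<subseteq> UK" "Ux \<inter> UK = {}" unfolding T3b_sep_def by blast
    show ?thesis unfolding T3b_sep_def
      apply (rule exI[of _ "f ` K"], rule exI[of _ "f ` Ux"], rule exI[of _ "f ` UK"])
      using h closed_img[OF inj h(1)] int[OF h(2,3)] by auto
  qed
  show ?thesis
  proof (cases i)
    case T1
    then obtain Ux Uy where h: "Ux \<in> \<sigma>" "Uy \<in> \<sigma>" "x \<in> Ux" "y \<notin> Ux" "y \<in> Uy" "x \<notin> Uy"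
      using s by auto
    show ?thesis using T1 h mem[OF h(1) xy(2)] mem[OF h(2) xy(1)]
      by (simp only: separated.simps) blast
  next
    case T2
    then obtain Ux Uy where h: "Ux \<in> \<sigma>" "Uy \<in> \<sigma>" "x \<in> Ux" "y \<in> Uy" "Ux \<inter> Uy = {}"
      using s by auto
    show ?thesis using T2 h int[OF h(1,2)] by (simp only: separated.simps) blast
  next
    case T4
    then obtain J K UJ UK where h: "closed_in_top X \<sigma> J" "closed_in_top X \<sigma> K" "UJ \<in> \<sigma>" "UK \<in> \<sigma>"
        "x \<in> J" "y \<in> K" "J \<subseteq> UJ" "K \<subseteq> UK" "UJ \<inter> UK = {}"
      using s by auto
    show ?thesis using T4 apply (simp only: separated.simps)
      apply (rule exI[of _ "f ` J"], rule exI[of _ "f ` K"], rule exI[of _ "f ` UJ"], rule exI[of _ "f ` UK"])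
      using h closed_img[OF inj h(1)] closed_img[OF inj h(2)] int[OF h(3,4)] by auto
  qed (use s A B in auto)
qed



lemma ft_Inter:
  assumes "finite_topology X \<sigma>" "F \<subseteq> \<sigma>" "F \<noteq> {}"
  shows "\<Inter>F \<in> \<sigma>"
proof -
  have "finite F" using assms(1,2) unfolding finite_topology_def
    by (meson finite_Pow_iff finite_subset)
  from this assms(3,2) show ?thesis
  proof (induction F rule: finite_ne_induct)
    case (singleton x) then show ?case by simp
  next
    case (insert x F) then show ?case using assms(1) unfolding finite_topology_def by simp
  qed
qed

lemma ft_Union:
  assumes "finite_topology X \<sigma>" "F \<subseteq> \<sigma>"
  shows "\<Union>F \<in> \<sigma>"
proof -
  have "finite F" using assms(1,2) unfolding finite_topology_def
    by (meson finite_Pow_iff finite_subset)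
  then show ?thesis using assms(2)
  proof (induction F rule: finite_induct)
    case empty then show ?case using assms(1) unfolding finite_topology_def by simp
  next
    case (insert x F) then show ?case using assms(1) unfolding finite_topology_def by simp
  qed
qed

lemma mo_self: "z \<in> minimal_open \<sigma> z"
  unfolding minimal_open_def by blast

lemma mo_sub: "U \<in> \<sigma> \<Longrightarrow> z \<in> U \<Longrightarrow> minimal_open \<sigma> z \<subseteq> U"
  unfolding minimal_open_def by blast

lemma mo_trans: "w \<in> minimal_open \<sigma> z \<Longrightarrow> z \<in> minimal_open \<sigma> v \<Longrightarrow> w \<in> minimal_open \<sigma> v"
  unfolding minimal_open_def by blast

lemma mo_open: "finite_topology X \<sigma> \<Longrightarrow> z \<in> X \<Longrightarrow> minimal_open \<sigma> z \<in> \<sigma>"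
  unfolding minimal_open_def
  by (rule ft_Inter) (auto simp: finite_topology_def)

lemma mo_X: "finite_topology X \<sigma> \<Longrightarrow> z \<in> X \<Longrightarrow> minimal_open \<sigma> z \<subseteq> X"
  by (rule mo_sub) (auto simp: finite_topology_def)

lemma ex_min_rank:
  fixes r :: "'b \<Rightarrow> nat"
  assumes "finite S" "s \<in> S"
  shows "\<exists>d\<in>S. \<forall>v\<in>S. r d \<le> r v"
proof -
  have "Min (r ` S) \<in> r ` S" using assms by (intro Min_in) auto
  then obtain d where "d \<in> S" "r d = Min (r ` S)" by auto
  then show ?thesis using assms by (metis Min_le finite_imageI image_eqI)
qed



lemma main_construction:
  fixes X :: "'b set" and \<sigma> :: "'b set set"
  assumes ft: "finite_topology X \<sigma>"
  shows "\<exists>T. finite_topology X T \<and>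
     (\<forall>x\<in>X. \<forall>y\<in>X. separated i X T x y \<longleftrightarrow> separated i X \<sigma> x y) \<and>
     (\<forall>x\<in>X. \<forall>y\<in>X. x \<noteq> y \<longrightarrow> minimal_open T x \<noteq> minimal_open T y)"
proof -
  have finX: "finite X" using ft unfolding finite_topology_def by blast
  obtain r :: "'b \<Rightarrow> nat" where inj: "inj_on r X"
    using finite_imp_inj_to_nat_seg[OF finX] by blast
  define m where "m = minimal_open \<sigma>"
  have m_self: "z \<in> m z" for z unfolding m_def by (rule mo_self)
  have m_sub: "U \<in> \<sigma> \<Longrightarrow> z \<in> U \<Longrightarrow> m z \<subseteq> U" for U z unfolding m_def by (rule mo_sub)
  have m_trans: "w \<in> m z \<Longrightarrow> z \<in> m v \<Longrightarrow> w \<in> m v" for w z v unfolding m_def by (rule mo_trans)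
  have m_open: "z \<in> X \<Longrightarrow> m z \<in> \<sigma>" for z unfolding m_def by (rule mo_open[OF ft])
  have m_X: "z \<in> X \<Longrightarrow> m z \<subseteq> X" for z unfolding m_def by (rule mo_X[OF ft])
  define le where "le w z \<longleftrightarrow> w \<in> X \<and> z \<in> X \<and> w \<in> m z \<and> (z \<in> m w \<longrightarrow> r w \<le> r z)" for w z
  define T where "T = {U. U \<subseteq> X \<and> (\<forall>z\<in>U. \<forall>w. le w z \<longrightarrow> w \<in> U)}"
  define \<phi> where "\<phi> U = \<Union>(m ` U)" for U
  have le_trans: "le w v" if "le w z" "le z v" for w z v
  proof -
    have "w \<in> m v" using that m_trans unfolding le_def by blast
    moreover have "r w \<le> r v" if "v \<in> m w"
    proof -
      have a: "z \<in> m w" using m_trans \<open>v \<in> m w\<close> \<open>le z v\<close> unfolding le_def by blast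
      have b: "v \<in> m z" using m_trans \<open>v \<in> m w\<close> \<open>le w z\<close> unfolding le_def by blast
      show ?thesis using a b \<open>le w z\<close> \<open>le z v\<close> unfolding le_def by auto
    qed
    ultimately show ?thesis using that unfolding le_def by blast
  qed
  have le_refl: "z \<in> X \<Longrightarrow> le z z" for z unfolding le_def using m_self by blast
  have T_le: "U \<in> T \<Longrightarrow> z \<in> U \<Longrightarrow> le w z \<Longrightarrow> w \<in> U" for U z w unfolding T_def by blast
  have ftT: "finite_topology X T"
    unfolding finite_topology_def
  proof (intro conjI ballI)
    show "finite X" by (rule finX)
    show "T \<subseteq> Pow X" unfolding T_def by blast
    show "{} \<in> T" unfolding T_def by blast
    show "X \<in> T" unfolding T_def le_def by blast
    fix U W assume "U \<in> T" "W \<in> T"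
    then show "U \<union> W \<in> T" "U \<inter> W \<in> T" unfolding T_def by blast+
  qed
  have sT: "\<sigma> \<subseteq> T"
  proof
    fix U assume U: "U \<in> \<sigma>"
    then have "U \<subseteq> X" using ft unfolding finite_topology_def by blast
    then show "U \<in> T" unfolding T_def le_def using m_sub[OF U] by blast
  qed
  have DT: "{w. le w z} \<in> T" for z
  proof -
    have "{w. le w z} \<subseteq> X" unfolding le_def by blast
    moreover have "\<forall>z'\<in>{w. le w z}. \<forall>w. le w z' \<longrightarrow> w \<in> {w. le w z}"
      using le_trans by blast
    ultimately show ?thesis unfolding T_def by blast
  qed
  have phi_open: "\<phi> U \<in> \<sigma>" if "U \<subseteq> X" for U
    unfolding \<phi>_def using that m_open by (intro ft_Union[OF ft]) blast
  have TX: "U \<in> T \<Longrightarrow> U \<subseteq> X" for U unfolding T_def by blast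
  have phi1: "\<phi> U \<in> \<sigma> \<and> U \<subseteq> \<phi> U" if "U \<in> T" for U
    using phi_open[OF TX[OF that]] m_self unfolding \<phi>_def by blast
  have phi2: "\<phi> U \<inter> \<phi> W = {}" if U: "U \<in> T" and W: "W \<in> T" and UW: "U \<inter> W = {}" for U W
  proof (rule ccontr)
    assume "\<phi> U \<inter> \<phi> W \<noteq> {}"
    then obtain w z1 z2 where h: "z1 \<in> U" "z2 \<in> W" "w \<in> m z1" "w \<in> m z2"
      unfolding \<phi>_def by blast
    have z12: "z1 \<in> X" "z2 \<in> X" using h TX U W by blast+
    then have wX: "w \<in> X" using h m_X by blast
    define D where "D = {v\<in>X. v \<in> m w \<and> w \<in> m v}"
    have "finite D" using finX unfolding D_def by simp
    moreover have "w \<in> D" using wX m_self unfolding D_def by blast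
    ultimately obtain d where d: "d \<in> D" "\<forall>v\<in>D. r d \<le> r v" using ex_min_rank[of D w r] by blast
    have led: "le d z" if "z \<in> X" "w \<in> m z" for z
    proof -
      have "d \<in> m z" using d(1) m_trans that unfolding D_def by blast
      moreover have "r d \<le> r z" if "z \<in> m d"
      proof -
        have "z \<in> m w" using m_trans \<open>z \<in> m d\<close> d(1) unfolding D_def by blast
        then have "z \<in> D" using \<open>z \<in> X\<close> \<open>w \<in> m z\<close> unfolding D_def by blast
        then show ?thesis using d(2) by blast
      qed
      ultimately show ?thesis using that d(1) unfolding le_def D_def by blast
    qed
    have "d \<in> U" using T_le[OF U h(1) led[OF z12(1) h(3)]] .
    moreover have "d \<in> W" using T_le[OF W h(2) led[OF z12(2) h(4)]] .
    ultimately show False using UW by blast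
  qed
  have phi3: "\<exists>J'. closed_in_top X \<sigma> J' \<and> z \<in> J' \<and> (\<forall>U\<in>T. J \<subseteq> U \<longrightarrow> J' \<subseteq> \<phi> U)"
    if J: "closed_in_top X T J" and zJ: "z \<in> J" for J z
  proof -
    define J' where "J' = {v\<in>X. z \<in> m v}"
    define S where "S = {v\<in>X. z \<notin> m v}"
    have zX: "z \<in> X" using J zJ unfolding closed_in_top_def by blast
    have "X - J' = \<phi> S"
    proof
      show "X - J' \<subseteq> \<phi> S" unfolding J'_def S_def \<phi>_def using m_self by blast
      show "\<phi> S \<subseteq> X - J'" unfolding J'_def S_def \<phi>_def using m_X m_trans by blast
    qed
    then have c: "closed_in_top X \<sigma> J'"
      using phi_open[of S] unfolding closed_in_top_def J'_def S_def by auto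
    have "J' \<subseteq> \<phi> U" if U: "U \<in> T" "J \<subseteq> U" for U
    proof
      fix v assume v: "v \<in> J'"
      show "v \<in> \<phi> U"
      proof (cases "v \<in> m z")
        case True then show ?thesis using zJ U(2) unfolding \<phi>_def by blast
      next
        case False
        then have "le z v" using v zX unfolding le_def J'_def by blast
        have "v \<in> J"
        proof (rule ccontr)
          assume "v \<notin> J"
          then have "v \<in> X - J" using v unfolding J'_def by blast
          then have "z \<in> X - J" using T_le[of "X - J" v z] J \<open>le z v\<close> unfolding closed_in_top_def by blast
          then show False using zJ by blast
        qed
        then show ?thesis using U phi1 by blast
      qed
    qed
    then show ?thesis using c zX m_self unfolding J'_def by blast
  qed
  have sep: "separated i X T x y \<longleftrightarrow> separated i X \<sigma> x y" if xy: "x \<in> X" "y \<in> X" for x y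
  proof (cases "x \<in> m y \<and> y \<in> m x")
    case True
    have "\<not> separated i X \<sigma> x y"
      using True m_sub by (intro not_sep) blast
    moreover have "\<not> separated i X T x y"
    proof (cases "r x \<le> r y")
      case True
      then have "le x y" using \<open>x \<in> m y \<and> y \<in> m x\<close> xy unfolding le_def by blast
      then show ?thesis using T_le by (intro not_sep) blast
    next
      case False
      then have "le y x" using \<open>x \<in> m y \<and> y \<in> m x\<close> xy unfolding le_def by auto
      then show ?thesis using T_le by (intro not_sep) blast
    qed
    ultimately show ?thesis by blast
  next
    case neq: False
    show ?thesis
    proof
      assume s: "separated i X T x y"
      show "separated i X \<sigma> x y"
      proof (cases "i = T1")
        case True
        then obtain Ux Uy where h: "Ux \<in> T" "Uy \<in> T" "x \<in> Ux" "y \<notin> Ux" "y \<in> Uy" "x \<notin> Uy"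
          using s by auto
        have "y \<notin> m x"
        proof
          assume "y \<in> m x"
          then have "le y x" using xy neq unfolding le_def by blast
          then show False using T_le[OF h(1,3)] h(4) by blast
        qed
        moreover have "x \<notin> m y"
        proof
          assume "x \<in> m y"
          then have "le x y" using xy neq unfolding le_def by blast
          then show False using T_le[OF h(2,5)] h(6) by blast
        qed
        ultimately show ?thesis using True m_open xy m_self by auto
      next
        case False
        show ?thesis
          by (rule sep_back[OF False, of T \<phi>]) (use phi1 phi2 phi3 s in auto)
      qed
    next
      assume "separated i X \<sigma> x y"
      then show "separated i X T x y" using sep_mono[OF sT] by blast
    qed
  qed
  have dist: "minimal_open T x \<noteq> minimal_open T y" if xy: "x \<in> X" "y \<in> X" "x \<noteq> y" for x y
  proof -
    have "\<not> le y x \<or> \<not> le x y"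
    proof (rule ccontr)
      assume "\<not> (\<not> le y x \<or> \<not> le x y)"
      then have "r x = r y" unfolding le_def by auto
      then show False using inj xy unfolding inj_on_def by blast
    qed
    then show ?thesis
    proof
      assume "\<not> le y x"
      have "minimal_open T x \<subseteq> {w. le w x}" using mo_sub[OF DT, of x x] le_refl xy by blast
      then show ?thesis using mo_self[of y T] \<open>\<not> le y x\<close> by blast
    next
      assume "\<not> le x y"
      have "minimal_open T y \<subseteq> {w. le w y}" using mo_sub[OF DT, of y y] le_refl xy by blast
      then show ?thesis using mo_self[of x T] \<open>\<not> le x y\<close> by blast
    qed
  qed
  show ?thesis using ftT sep dist by blast
qed

theorem lemma3p4:
  fixes i :: sep_axiom
    and V :: "'a set" and E :: "'a \<Rightarrow> 'a \<Rightarrow> bool"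
    and X :: "'b set" and \<sigma> :: "'b set set"
  assumes "simple_graph V E"
    and "finite_topology X \<sigma>"
    and "graph_iso X (Gi_adj i X \<sigma>) V E"
  shows "\<exists>\<tau>. finite_topology V \<tau> \<and> graph_iso V (Gi_adj i V \<tau>) V E \<and>
           (\<forall>x\<in>V. \<forall>y\<in>V. x \<noteq> y \<longrightarrow> minimal_open \<tau> x \<noteq> minimal_open \<tau> y)"
proof -
  obtain f where bij: "bij_betw f X V"
    and adj: "\<forall>x\<in>X. \<forall>y\<in>X. Gi_adj i X \<sigma> x y \<longleftrightarrow> E (f x) (f y)"
    using assms(3) unfolding graph_iso_def by blast
  have inj: "inj_on f X" and img: "f ` X = V" using bij unfolding bij_betw_def by auto
  define g where "g = inv_into X f"
  define \<sigma>V where "\<sigma>V = (`) f ` \<sigma>"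
  have ft: "finite_topology X \<sigma>" by (rule assms(2))
  have PX: "\<sigma> \<subseteq> Pow X" using ft unfolding finite_topology_def by blast
  have ftV: "finite_topology V \<sigma>V"
    unfolding finite_topology_def
  proof (intro conjI ballI)
    show "finite V" using ft img unfolding finite_topology_def by blast
    show "\<sigma>V \<subseteq> Pow V" using PX img unfolding \<sigma>V_def by blast
    show "{} \<in> \<sigma>V" using ft unfolding \<sigma>V_def finite_topology_def by force
    show "V \<in> \<sigma>V" using ft img unfolding \<sigma>V_def finite_topology_def by blast
    fix U W assume U: "U \<in> \<sigma>V" and W: "W \<in> \<sigma>V"
    then obtain U0 W0 where h: "U0 \<in> \<sigma>" "W0 \<in> \<sigma>" "U = f ` U0" "W = f ` W0"
      unfolding \<sigma>V_def by blast
    have "U0 \<union> W0 \<in> \<sigma>" "U0 \<inter> W0 \<in> \<sigma>" using ft h unfolding finite_topology_def by blast+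
    moreover have "f ` (U0 \<inter> W0) = U \<inter> W" using inj_on_image_Int[OF inj] h PX by blast
    moreover have "f ` (U0 \<union> W0) = U \<union> W" using h by blast
    ultimately show "U \<union> W \<in> \<sigma>V" "U \<inter> W \<in> \<sigma>V" unfolding \<sigma>V_def by (metis image_eqI)+
  qed
  have gimg: "g ` V = X" using img inj unfolding g_def by (metis inv_into_image_cancel order_refl)
  have ginj: "inj_on g V" using img unfolding g_def by (simp add: inj_on_inv_into)
  have gsig: "(`) g ` \<sigma>V = \<sigma>"
  proof -
    have "(`) g ` \<sigma>V = (\<lambda>U. g ` f ` U) ` \<sigma>" unfolding \<sigma>V_def by (simp add: image_image)
    also have "\<dots> = (\<lambda>U. U) ` \<sigma>"
    proof (rule image_cong)
      fix U assume "U \<in> \<sigma>"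
      then have "U \<subseteq> X" using PX by blast
      then show "g ` f ` U = U" unfolding g_def by (rule inv_into_image_cancel[OF inj])
    qed simp
    finally show ?thesis by simp
  qed
  have PV: "\<sigma>V \<subseteq> Pow V" using PX img unfolding \<sigma>V_def by blast
  have gf: "x \<in> X \<Longrightarrow> g (f x) = x" for x unfolding g_def using inj by simp
  have fg: "a \<in> V \<Longrightarrow> f (g a) = a" for a unfolding g_def using img by (simp add: f_inv_into_f)
  have gX: "a \<in> V \<Longrightarrow> g a \<in> X" for a using gimg by blast
  have sepV: "separated i V \<sigma>V a b \<longleftrightarrow> separated i X \<sigma> (g a) (g b)" if ab: "a \<in> V" "b \<in> V" for a b
  proof
    assume "separated i V \<sigma>V a b"
    from sep_inj[OF ginj PV ab this] show "separated i X \<sigma> (g a) (g b)" using gimg gsig by simp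
  next
    assume "separated i X \<sigma> (g a) (g b)"
    from sep_inj[OF inj PX gX[OF ab(1)] gX[OF ab(2)] this]
    show "separated i V \<sigma>V a b" using img fg ab unfolding \<sigma>V_def by simp
  qed
  obtain T where T: "finite_topology V T"
    "\<forall>x\<in>V. \<forall>y\<in>V. separated i V T x y \<longleftrightarrow> separated i V \<sigma>V x y"
    "\<forall>x\<in>V. \<forall>y\<in>V. x \<noteq> y \<longrightarrow> minimal_open T x \<noteq> minimal_open T y"
    using main_construction[OF ftV, of i] by blast
  have "graph_iso V (Gi_adj i V T) V E"
    unfolding graph_iso_def
  proof (intro exI[of _ id] conjI ballI)
    show "bij_betw id V V" by simp
    fix a b assume ab: "a \<in> V" "b \<in> V"
    have "Gi_adj i V T a b \<longleftrightarrow> a \<noteq> b \<and> \<not> separated i X \<sigma> (g a) (g b)"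
      unfolding Gi_adj_def using T(2) sepV ab by blast
    also have "\<dots> \<longleftrightarrow> Gi_adj i X \<sigma> (g a) (g b)"
      unfolding Gi_adj_def using fg ab by metis
    also have "\<dots> \<longleftrightarrow> E a b" using adj gX ab fg by metis
    finally show "Gi_adj i V T a b \<longleftrightarrow> E (id a) (id b)" by simp
  qed
  then show ?thesis using T(1,3) by blast
qed

end
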